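(* For each $\alpha\in(0,\pi/2)$ and $\beta\in[0,\alpha]$, the competitive ratio of the $\beta$-Hedge algorithm with parameter $\beta$ equals $$\max_{r\in[\max\{0,-\cos(2\alpha)\},\,1]} f_1(\alpha,\beta,r).$$
   Context: Online drone coverage on a line. A drone has a fixed half angle-of-view $\alpha\in(0,\pi/2)$. A drone at a point $T=(t_x,t_y)$ with $t_y\ge 0$ covers the segment $[t_x-t_y\tan\alpha,\ t_x+t_y\tan\alpha]$ of the $x$-axis. For a point $X=(x,0)$ its feasibility cone is $\mathrm{FC}(X)=\{(u,v): v\ge 0,\ |u-x|\le v\tan\alpha\}$, and the feasibility cone of a finite set of points is the intersection of their cones. An input is a sequence $X_0=(0,0),X_1,\dots,X_n$ ($n\ge1$) of points $X_i=(x_i,0)$ revealed one at a time. A solution is a sequence of positions $P_0=(0,0),P_1,\dots,P_n$ with $P_i\in\mathrm{FC}(X_0,\dots,X_i)$; its cost is $\sum_i|P_iP_{i+1}|$. $\mathrm{OPT}(\mathbf X;\alpha)$ is the minimum cost of a solution (input known in advance). A request $X_{i+1}$ is redundant if $x_{i+1}\in[\min_{j\le i}x_j,\max_{j\le i}x_j]$. An input is good if it has no redundant requests, $\min_j x_j=-1$ and $\max_j x_j\in[0,1]$. The competitive ratio of an algorithm is the supremum over good inputs of its cost divided by $\mathrm{OPT}$. The $\beta$-Hedge algorithm with parameter $\beta\in[0,\alpha]$: if $P_{i-1}\in\mathrm{FC}(X_0,\dots,X_i)$ then $P_i=P_{i-1}$; otherwise the drone moves from $P_{i-1}$ along the ray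 with direction $(\operatorname{sgn}(x_i)\sin\beta,\cos\beta)$ (angle $\beta$ from the upward vertical, tilted toward the new request), and $P_i$ is the first point of this ray in $\mathrm{FC}(X_0,\dots,X_i)$. $$f_1(\alpha,\beta,r)=\frac{2\sin\alpha}{\cos\beta(\tan\alpha+\tan\beta)}\cdot\frac{1+\frac{2\tan\beta}{\tan\alpha+\tan\beta}\,r}{\sqrt{1+r^2+2\cos(2\alpha)\,r}}.$$ *)

theory Defs
  imports "HOL-Analysis.Analysis"
begin

text \<open>Points of the plane are pairs (u,v) :: real \<times> real. An input is a pair
  (n, xs) with n \<ge> 1 and requests X_i = (xs i, 0) for i = 0..n (values of xs
  beyond n are irrelevant).\<close>

definition edist :: "real \<times> real \<Rightarrow> real \<times> real \<Rightarrow> real" where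
  "edist P Q = sqrt ((fst P - fst Q)^2 + (snd P - snd Q)^2)"

definition FC :: "real \<Rightarrow> (nat \<Rightarrow> real) \<Rightarrow> nat \<Rightarrow> (real \<times> real) set" where
  "FC \<alpha> xs i = {(u, v). v \<ge> 0 \<and> (\<forall>j\<le>i. \<bar>u - xs j\<bar> \<le> v * tan \<alpha>)}"

definition cost :: "nat \<Rightarrow> (nat \<Rightarrow> real \<times> real) \<Rightarrow> real" where
  "cost n P = (\<Sum>i<n. edist (P i) (P (Suc i)))"

definition is_solution :: "real \<Rightarrow> nat \<Rightarrow> (nat \<Rightarrow> real) \<Rightarrow> (nat \<Rightarrow> real \<times> real) \<Rightarrow> bool" where
  "is_solution \<alpha> n xs P \<longleftrightarrow> P 0 = (0, 0) \<and> (\<forall>i\<le>n. P i \<in> FC \<alpha> xs i)"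

definition OPT :: "real \<Rightarrow> nat \<Rightarrow> (nat \<Rightarrow> real) \<Rightarrow> real" where
  "OPT \<alpha> n xs = Inf {cost n P | P. is_solution \<alpha> n xs P}"

definition redundant :: "(nat \<Rightarrow> real) \<Rightarrow> nat \<Rightarrow> bool" where
  "redundant xs i \<longleftrightarrow>
     (MIN j\<in>{..i}. xs j) \<le> xs (Suc i) \<and> xs (Suc i) \<le> (MAX j\<in>{..i}. xs j)"

definition good_input :: "nat \<Rightarrow> (nat \<Rightarrow> real) \<Rightarrow> bool" where
  "good_input n xs \<longleftrightarrow> n \<ge> 1 \<and> xs 0 = 0 \<and> (\<forall>i<n. \<not> redundant xs i)
     \<and> (MIN j\<in>{..n}. xs j) = -1
     \<and> 0 \<le> (MAX j\<in>{..n}. xs j) \<and> (MAX j\<in>{..n}. xs j) \<le> 1"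

definition ray_pt :: "real \<Rightarrow> real \<Rightarrow> real \<times> real \<Rightarrow> real \<Rightarrow> real \<times> real" where
  "ray_pt \<beta> x P t = (fst P + t * (sgn x * sin \<beta>), snd P + t * cos \<beta>)"

text \<open>Positions of the beta-Hedge algorithm; the first point of the ray in the
  (closed) feasibility cone is the one with the least parameter t \<ge> 0.\<close>
primrec hedge :: "real \<Rightarrow> real \<Rightarrow> (nat \<Rightarrow> real) \<Rightarrow> nat \<Rightarrow> real \<times> real" where
  "hedge \<alpha> \<beta> xs 0 = (0, 0)"
| "hedge \<alpha> \<beta> xs (Suc i) =
     (let P = hedge \<alpha> \<beta> xs i in
      if P \<in> FC \<alpha> xs (Suc i) then P
      else ray_pt \<beta> (xs (Suc i)) P
             (Inf {t. t \<ge> 0 \<and> ray_pt \<beta> (xs (Suc i)) P t \<in> FC \<alpha> xs (Suc i)}))"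

text \<open>Competitive ratio of beta-Hedge: supremum over good inputs of ALG / OPT
  (taken in the extended reals, so an unbounded ratio gives \<infinity>).\<close>
definition hedge_CR :: "real \<Rightarrow> real \<Rightarrow> ereal" where
  "hedge_CR \<alpha> \<beta> =
     (SUP (n, xs) \<in> {(n, xs). good_input n xs}.
        ereal (cost n (hedge \<alpha> \<beta> xs) / OPT \<alpha> n xs))"

definition f1 :: "real \<Rightarrow> real \<Rightarrow> real \<Rightarrow> real" where
  "f1 \<alpha> \<beta> r =
     (2 * sin \<alpha> / (cos \<beta> * (tan \<alpha> + tan \<beta>))) *
     ((1 + (2 * tan \<beta> / (tan \<alpha> + tan \<beta>)) * r) /
      sqrt (1 + r^2 + 2 * cos (2 * \<alpha>) * r))"

end

theory Submission
  imports Defs "HOL-Analysis.Analysis"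
begin


lemma basics:
  assumes "0 < \<alpha>" "\<alpha> < pi / 2" "0 \<le> \<beta>" "\<beta> \<le> \<alpha>"
  shows "tan \<alpha> > 0" "cos \<beta> > 0" "sin \<beta> \<ge> 0" "sin \<beta> \<le> tan \<alpha> * cos \<beta>"
    "sin \<alpha> > 0" "cos \<alpha> > 0" "tan \<alpha> = sin \<alpha> / cos \<alpha>"
    "sin \<beta> + tan \<alpha> * cos \<beta> > 0"
proof -
  show t: "tan \<alpha> > 0" using assms tan_gt_zero by auto
  show c: "cos \<beta> > 0" using assms by (intro cos_gt_zero_pi) auto
  show s: "sin \<beta> \<ge> 0" using assms by (intro sin_ge_zero) auto
  have "tan \<beta> \<le> tan \<alpha>" using assms by (intro tan_mono_le) auto
  then show "sin \<beta> \<le> tan \<alpha> * cos \<beta>" using c by (simp add: tan_def field_simps)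
  show "sin \<alpha> > 0" using assms by (intro sin_gt_zero) auto
  show "cos \<alpha> > 0" using assms by (intro cos_gt_zero_pi) auto
  show "tan \<alpha> = sin \<alpha> / cos \<alpha>" by (simp add: tan_def)
  show "sin \<beta> + tan \<alpha> * cos \<beta> > 0" using t c s by (simp add: add_nonneg_pos)
qed

lemma FC_iff:
  "(a, b) \<in> FC \<alpha> xs i \<longleftrightarrow> 0 \<le> b \<and> a - b * tan \<alpha> \<le> (MIN j\<in>{..i}. xs j)
      \<and> (MAX j\<in>{..i}. xs j) \<le> a + b * tan \<alpha>"
proof -
  have "(\<forall>j\<le>i. \<bar>a - xs j\<bar> \<le> b * tan \<alpha>) \<longleftrightarrow>
        (\<forall>j\<in>{..i}. a - b * tan \<alpha> \<le> xs j) \<and> (\<forall>j\<in>{..i}. xs j \<le> a + b * tan \<alpha>)"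
  proof -
    have "\<And>j. \<bar>a - xs j\<bar> \<le> b * tan \<alpha> \<longleftrightarrow> a - b * tan \<alpha> \<le> xs j \<and> xs j \<le> a + b * tan \<alpha>"
      by (auto simp: abs_le_iff)
    then show ?thesis by auto
  qed
  also have "\<dots> \<longleftrightarrow> a - b * tan \<alpha> \<le> (MIN j\<in>{..i}. xs j) \<and> (MAX j\<in>{..i}. xs j) \<le> a + b * tan \<alpha>"
    by (simp add: Min_ge_iff Max_le_iff)
  finally show ?thesis by (auto simp: FC_def)
qed

lemma Min_Suc: "(MIN j\<in>{..Suc i}. xs j) = min (MIN j\<in>{..i}. xs j) (xs (Suc i))"
  by (simp add: atMost_Suc min.commute)
lemma Max_Suc: "(MAX j\<in>{..Suc i}. xs j) = max (MAX j\<in>{..i}. xs j) (xs (Suc i))"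
  by (simp add: atMost_Suc max.commute)

lemma Min_le0: "(xs :: nat \<Rightarrow> real) 0 = (0::real) \<Longrightarrow> (MIN j\<in>{..i}. xs j) \<le> 0"
  using Min_le[of "xs ` {..i}" "xs 0"] by auto
lemma Max_ge0: "(xs :: nat \<Rightarrow> real) 0 = (0::real) \<Longrightarrow> (MAX j\<in>{..i}. xs j) \<ge> 0"
  using Max_ge[of "xs ` {..i}" "xs 0"] by auto

lemma edist_eq: "edist P Q = dist P Q"
  by (simp add: edist_def dist_prod_def dist_real_def power2_commute)

lemma Min_le_Max_im: "(MIN j\<in>{..i::nat}. (xs j::real)) \<le> (MAX j\<in>{..i}. xs j)"
  using Min_le[of "xs ` {..i}" "xs 0"] Max_ge[of "xs ` {..i}" "xs 0"] by auto

lemma step_right: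
  assumes ang: "0 < \<alpha>" "\<alpha> < pi / 2" "0 \<le> \<beta>" "\<beta> \<le> \<alpha>"
    and P: "hedge \<alpha> \<beta> xs i = (u, v)" and feas: "(u, v) \<in> FC \<alpha> xs i"
    and x: "xs (Suc i) = x" "x > (MAX j\<in>{..i}. xs j)" "x > 0"
  shows "fst (hedge \<alpha> \<beta> xs (Suc i)) - snd (hedge \<alpha> \<beta> xs (Suc i)) * tan \<alpha> =
           (if x \<le> u + v * tan \<alpha> then u - v * tan \<alpha> else u - v * tan \<alpha> -
             ((tan \<alpha> * cos \<beta> - sin \<beta>) / (sin \<beta> + tan \<alpha> * cos \<beta>)) * (x - (u + v * tan \<alpha>)))
    \<and> fst (hedge \<alpha> \<beta> xs (Suc i)) + snd (hedge \<alpha> \<beta> xs (Suc i)) * tan \<alpha> = max (u + v * tan \<alpha>) x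
    \<and> edist (u, v) (hedge \<alpha> \<beta> xs (Suc i)) = (snd (hedge \<alpha> \<beta> xs (Suc i)) - v) / cos \<beta>"
proof -
  note b = basics[OF ang]
  define k where "k = tan \<alpha>"
  define D where "D = sin \<beta> + tan \<alpha> * cos \<beta>"
  define mn where "mn = (MIN j\<in>{..i}. xs j)"
  define mx where "mx = (MAX j\<in>{..i}. xs j)"
  have k: "k > 0" using b k_def by simp
  have D: "D > 0" using b D_def by simp
  have f: "0 \<le> v" "u - v * k \<le> mn" "mx \<le> u + v * k" using feas by (auto simp: FC_iff k_def mn_def mx_def)
  have "mn \<le> mx" unfolding mn_def mx_def by (rule Min_le_Max_im)
  then have "mn < x" using x(2) unfolding mx_def by linarith
  then have mnS: "(MIN j\<in>{..Suc i}. xs j) = mn" using x unfolding Min_Suc mn_def[symmetric]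
    by simp
  have mxS: "(MAX j\<in>{..Suc i}. xs j) = x" using x by (simp add: Max_Suc)
  have FCS: "(a, bb) \<in> FC \<alpha> xs (Suc i) \<longleftrightarrow> 0 \<le> bb \<and> a - bb * k \<le> mn \<and> x \<le> a + bb * k" for a bb
    by (simp add: FC_iff mnS mxS k_def)
  have sg: "sgn x = 1" using x by simp
  show "fst (hedge \<alpha> \<beta> xs (Suc i)) - snd (hedge \<alpha> \<beta> xs (Suc i)) * tan \<alpha> =
           (if x \<le> u + v * tan \<alpha> then u - v * tan \<alpha> else u - v * tan \<alpha> -
             ((tan \<alpha> * cos \<beta> - sin \<beta>) / (sin \<beta> + tan \<alpha> * cos \<beta>)) * (x - (u + v * tan \<alpha>)))
    \<and> fst (hedge \<alpha> \<beta> xs (Suc i)) + snd (hedge \<alpha> \<beta> xs (Suc i)) * tan \<alpha> = max (u + v * tan \<alpha>) x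
    \<and> edist (u, v) (hedge \<alpha> \<beta> xs (Suc i)) = (snd (hedge \<alpha> \<beta> xs (Suc i)) - v) / cos \<beta>"
  proof (cases "x \<le> u + v * k")
    case True
    then have "(u, v) \<in> FC \<alpha> xs (Suc i)" using FCS f by simp
    then have "hedge \<alpha> \<beta> xs (Suc i) = (u, v)" by (simp add: P)
    then show ?thesis using True by (simp add: k_def edist_def)
  next
    case False
    define ts where "ts = (x - (u + v * k)) / D"
    have ts: "ts > 0" using False D by (simp add: ts_def)
    have nf: "(u, v) \<notin> FC \<alpha> xs (Suc i)" using FCS False by simp
    have ray: "ray_pt \<beta> x (u, v) t = (u + t * sin \<beta>, v + t * cos \<beta>)" for t
      by (simp add: ray_pt_def sg)
    have S: "{t. t \<ge> 0 \<and> ray_pt \<beta> x (u, v) t \<in> FC \<alpha> xs (Suc i)} = {ts..}"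
    proof (intro set_eqI iffI)
      fix t assume "t \<in> {t. t \<ge> 0 \<and> ray_pt \<beta> x (u, v) t \<in> FC \<alpha> xs (Suc i)}"
      then have "t \<ge> 0" "x \<le> u + t * sin \<beta> + (v + t * cos \<beta>) * k" by (auto simp: ray FCS)
      then have "x - (u + v * k) \<le> t * D" by (simp add: D_def k_def algebra_simps)
      then show "t \<in> {ts..}" using D by (simp add: ts_def pos_divide_le_eq mult.commute)
    next
      fix t assume "t \<in> {ts..}"
      then have t: "t \<ge> ts" by simp
      then have t0: "t \<ge> 0" using ts by simp
      have "x - (u + v * k) \<le> t * D" using t D by (simp add: ts_def pos_divide_le_eq mult.commute)
      then have 1: "x \<le> u + t * sin \<beta> + (v + t * cos \<beta>) * k" by (simp add: D_def k_def algebra_simps)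
      have "t * sin \<beta> \<le> t * (k * cos \<beta>)" using t0 b k_def by (intro mult_left_mono) auto
      then have 2: "u + t * sin \<beta> - (v + t * cos \<beta>) * k \<le> mn" using f by (simp add: algebra_simps)
      have 3: "0 \<le> v + t * cos \<beta>" using f t0 b by simp
      show "t \<in> {t. t \<ge> 0 \<and> ray_pt \<beta> x (u, v) t \<in> FC \<alpha> xs (Suc i)}"
        using 1 2 3 t0 by (simp add: ray FCS)
    qed
    have H: "hedge \<alpha> \<beta> xs (Suc i) = (u + ts * sin \<beta>, v + ts * cos \<beta>)"
      proof -
      have "hedge \<alpha> \<beta> xs (Suc i) = ray_pt \<beta> x (u, v) ts" using nf by (simp add: P S Let_def x(1))
      then show ?thesis by (simp add: ray)
    qed
    have e: "edist (u, v) (u + ts * sin \<beta>, v + ts * cos \<beta>) = ts"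
    proof -
      have "(ts * sin \<beta>)^2 + (ts * cos \<beta>)^2 = ts^2 * ((sin \<beta>)^2 + (cos \<beta>)^2)" by (simp only: power_mult_distrib distrib_left)
      then have "(ts * sin \<beta>)^2 + (ts * cos \<beta>)^2 = ts^2" by simp
      then show ?thesis using ts by (simp add: edist_def)
    qed
    have c1: "ts * sin \<beta> - ts * cos \<beta> * k = - ((k * cos \<beta> - sin \<beta>) / D) * (x - (u + v * k))"
      using D by (simp add: ts_def field_simps)
    have "ts * D = x - (u + v * k)" using D by (simp add: ts_def)
    moreover have "ts * sin \<beta> + ts * cos \<beta> * k = ts * D" by (simp add: D_def k_def algebra_simps)
    ultimately have c2: "ts * sin \<beta> + ts * cos \<beta> * k = x - (u + v * k)" by simp
    have fs: "fst (hedge \<alpha> \<beta> xs (Suc i)) = u + ts * sin \<beta>" "snd (hedge \<alpha> \<beta> xs (Suc i)) = v + ts * cos \<beta>"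
      using H by auto
    have r1: "u + ts * sin \<beta> - (v + ts * cos \<beta>) * k = u - v * k - ((k * cos \<beta> - sin \<beta>) / D) * (x - (u + v * k))"
      using c1 by (simp add: algebra_simps)
    have r2: "u + ts * sin \<beta> + (v + ts * cos \<beta>) * k = x"
      using c2 by (simp add: algebra_simps)
    have r3: "(v + ts * cos \<beta> - v) / cos \<beta> = ts" using b by simp
    show ?thesis unfolding fs H[symmetric] e[folded H] using False r1 r2 r3
      unfolding k_def D_def by (auto simp: mult.commute)
  qed
qed

lemma step_left:
  assumes ang: "0 < \<alpha>" "\<alpha> < pi / 2" "0 \<le> \<beta>" "\<beta> \<le> \<alpha>"
    and P: "hedge \<alpha> \<beta> xs i = (u, v)" and feas: "(u, v) \<in> FC \<alpha> xs i"
    and x: "xs (Suc i) = x" "x < (MIN j\<in>{..i}. xs j)" "x < 0"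
  shows "fst (hedge \<alpha> \<beta> xs (Suc i)) + snd (hedge \<alpha> \<beta> xs (Suc i)) * tan \<alpha> =
           (if u - v * tan \<alpha> \<le> x then u + v * tan \<alpha> else u + v * tan \<alpha> +
             ((tan \<alpha> * cos \<beta> - sin \<beta>) / (sin \<beta> + tan \<alpha> * cos \<beta>)) * ((u - v * tan \<alpha>) - x))
    \<and> fst (hedge \<alpha> \<beta> xs (Suc i)) - snd (hedge \<alpha> \<beta> xs (Suc i)) * tan \<alpha> = min (u - v * tan \<alpha>) x
    \<and> edist (u, v) (hedge \<alpha> \<beta> xs (Suc i)) = (snd (hedge \<alpha> \<beta> xs (Suc i)) - v) / cos \<beta>"
proof -
  note b = basics[OF ang]
  define k where "k = tan \<alpha>"
  define D where "D = sin \<beta> + tan \<alpha> * cos \<beta>"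
  define mn where "mn = (MIN j\<in>{..i}. xs j)"
  define mx where "mx = (MAX j\<in>{..i}. xs j)"
  have k: "k > 0" using b k_def by simp
  have D: "D > 0" using b D_def by simp
  have f: "0 \<le> v" "u - v * k \<le> mn" "mx \<le> u + v * k" using feas by (auto simp: FC_iff k_def mn_def mx_def)
  have "mn \<le> mx" unfolding mn_def mx_def by (rule Min_le_Max_im)
  then have "x < mx" using x(2) unfolding mn_def by linarith
  then have mxS: "(MAX j\<in>{..Suc i}. xs j) = mx" using x unfolding Max_Suc mx_def[symmetric]
    by simp
  have mnS: "(MIN j\<in>{..Suc i}. xs j) = x" using x by (simp add: Min_Suc)
  have FCS: "(a, bb) \<in> FC \<alpha> xs (Suc i) \<longleftrightarrow> 0 \<le> bb \<and> a - bb * k \<le> x \<and> mx \<le> a + bb * k" for a bb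
    by (simp add: FC_iff mnS mxS k_def)
  have sg: "sgn x = -1" using x by simp
  show ?thesis
  proof (cases "u - v * k \<le> x")
    case True
    then have "(u, v) \<in> FC \<alpha> xs (Suc i)" using FCS f by simp
    then have "hedge \<alpha> \<beta> xs (Suc i) = (u, v)" by (simp add: P)
    then show ?thesis using True by (simp add: k_def edist_def)
  next
    case False
    define ts where "ts = ((u - v * k) - x) / D"
    have ts: "ts > 0" using False D by (simp add: ts_def)
    have nf: "(u, v) \<notin> FC \<alpha> xs (Suc i)" using FCS False by simp
    have ray: "ray_pt \<beta> x (u, v) t = (u - t * sin \<beta>, v + t * cos \<beta>)" for t
      by (simp add: ray_pt_def sg)
    have S: "{t. t \<ge> 0 \<and> ray_pt \<beta> x (u, v) t \<in> FC \<alpha> xs (Suc i)} = {ts..}"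
    proof (intro set_eqI iffI)
      fix t assume "t \<in> {t. t \<ge> 0 \<and> ray_pt \<beta> x (u, v) t \<in> FC \<alpha> xs (Suc i)}"
      then have "t \<ge> 0" "u - t * sin \<beta> - (v + t * cos \<beta>) * k \<le> x" by (auto simp: ray FCS)
      then have "(u - v * k) - x \<le> t * D" by (simp add: D_def k_def algebra_simps)
      then show "t \<in> {ts..}" using D by (simp add: ts_def pos_divide_le_eq mult.commute)
    next
      fix t assume "t \<in> {ts..}"
      then have t: "t \<ge> ts" by simp
      then have t0: "t \<ge> 0" using ts by simp
      have "(u - v * k) - x \<le> t * D" using t D by (simp add: ts_def pos_divide_le_eq mult.commute)
      then have 1: "u - t * sin \<beta> - (v + t * cos \<beta>) * k \<le> x" by (simp add: D_def k_def algebra_simps)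
      have "t * sin \<beta> \<le> t * (k * cos \<beta>)" using t0 b k_def by (intro mult_left_mono) auto
      then have 2: "mx \<le> u - t * sin \<beta> + (v + t * cos \<beta>) * k" using f by (simp add: algebra_simps)
      have 3: "0 \<le> v + t * cos \<beta>" using f t0 b by simp
      show "t \<in> {t. t \<ge> 0 \<and> ray_pt \<beta> x (u, v) t \<in> FC \<alpha> xs (Suc i)}"
        using 1 2 3 t0 by (simp add: ray FCS)
    qed
    have H: "hedge \<alpha> \<beta> xs (Suc i) = (u - ts * sin \<beta>, v + ts * cos \<beta>)"
    proof -
      have "hedge \<alpha> \<beta> xs (Suc i) = ray_pt \<beta> x (u, v) ts" using nf by (simp add: P S Let_def x(1))
      then show ?thesis by (simp add: ray)
    qed
    have e: "edist (u, v) (u - ts * sin \<beta>, v + ts * cos \<beta>) = ts"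
    proof -
      have "(ts * sin \<beta>)^2 + (ts * cos \<beta>)^2 = ts^2 * ((sin \<beta>)^2 + (cos \<beta>)^2)" by (simp only: power_mult_distrib distrib_left)
      then have "(ts * sin \<beta>)^2 + (ts * cos \<beta>)^2 = ts^2" by simp
      then show ?thesis using ts by (simp add: edist_def)
    qed
    have c1: "ts * cos \<beta> * k - ts * sin \<beta> = ((k * cos \<beta> - sin \<beta>) / D) * ((u - v * k) - x)"
      using D by (simp add: ts_def field_simps)
    have "ts * D = (u - v * k) - x" using D by (simp add: ts_def)
    moreover have "ts * sin \<beta> + ts * cos \<beta> * k = ts * D" by (simp add: D_def k_def algebra_simps)
    ultimately have c2: "ts * sin \<beta> + ts * cos \<beta> * k = (u - v * k) - x" by simp
    have fs: "fst (hedge \<alpha> \<beta> xs (Suc i)) = u - ts * sin \<beta>" "snd (hedge \<alpha> \<beta> xs (Suc i)) = v + ts * cos \<beta>"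
      using H by auto
    have r1: "u - ts * sin \<beta> + (v + ts * cos \<beta>) * k = u + v * k + ((k * cos \<beta> - sin \<beta>) / D) * ((u - v * k) - x)"
      using c1 by (simp add: algebra_simps)
    have r2: "u - ts * sin \<beta> - (v + ts * cos \<beta>) * k = x"
      using c2 by (simp add: algebra_simps)
    have r3: "(v + ts * cos \<beta> - v) / cos \<beta> = ts" using b by simp
    show ?thesis unfolding fs H[symmetric] e[folded H] using False r1 r2 r3
      unfolding k_def D_def by (auto simp: mult.commute)
  qed
qed



definition AI :: "real \<Rightarrow> real \<Rightarrow> real \<Rightarrow> real \<Rightarrow> real \<Rightarrow> bool" where
  "AI c L R A B \<longleftrightarrow> L \<le> -B \<and> A \<le> R \<and> R + c*L \<le> (1-c^2)*A \<and> -L - c*R \<le> (1-c^2)*B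
     \<and> c*R + L \<le> 0 \<and> R + c*L \<ge> 0 \<and> (R = A \<or> L = -B)"

lemma AI_right:
  assumes c: "0 \<le> c" "c \<le> 1" and I: "AI c L R A B" and x: "x > A"
  shows "AI c (if x \<le> R then L else L - c*(x-R)) (max R x) x B"
proof (cases "x \<le> R")
  case True
  have "R \<noteq> A" using True x by simp
  have "(1-c^2)*A \<le> (1-c^2)*x" using x c by (intro mult_left_mono) (auto simp: power2_eq_square mult_le_one)
  then show ?thesis using I True \<open>R \<noteq> A\<close> by (auto simp: AI_def max_def)
next
  case False
  have cx: "c*(x-R) \<ge> 0" using False c by simp
  have q1: "c * (L + c*R) \<le> 0" using I c by (auto simp: AI_def intro: mult_nonneg_nonpos)
  have "c*L \<ge> -R" using I by (simp add: AI_def)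
  have "(1-c^2)*(x-R) \<ge> 0" using False c by (intro mult_nonneg_nonneg) (auto simp: power2_eq_square mult_le_one)
  then have q2: "x + c*(L - c*(x-R)) \<ge> 0" using \<open>c*L \<ge> -R\<close> by (simp add: algebra_simps power2_eq_square)
  have q3: "x + c*(L - c*(x-R)) \<le> (1-c^2)*x" using q1 by (simp add: algebra_simps power2_eq_square)
  have q4: "-(L - c*(x-R)) - c*x = -L - c*R" by (simp add: algebra_simps)
  have q5: "c*x + (L - c*(x-R)) = c*R + L" by (simp add: algebra_simps)
  show ?thesis using I False cx q2 q3 q4 q5 by (auto simp: AI_def max_def)
qed

lemma AI_left:
  assumes c: "0 \<le> c" "c \<le> 1" and I: "AI c L R A B" and x: "x < -B"
  shows "AI c (min L x) (if L \<le> x then R else R + c*(L-x)) A (-x)"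
proof -
  have I': "AI c (-R) (-L) B A" using I by (auto simp: AI_def algebra_simps)
  have "AI c (if -x \<le> -L then -R else -R - c*(-x-(-L))) (max (-L) (-x)) (-x) A"
    using AI_right[OF c I', of "-x"] x by simp
  then show ?thesis by (auto simp: AI_def algebra_simps min_def max_def split: if_splits)
qed

lemma AI_final:
  assumes c: "0 \<le> c" "c \<le> 1" and I: "AI c L R b 1" and b: "0 \<le> b" "b \<le> 1"
  shows "R - L \<le> (1+c)*(1+(1-c)*b)"
proof -
  have e: "(1+c)*(1+(1-c)*b) = 1 + c + b - c^2*b" by (simp add: algebra_simps power2_eq_square)
  from I have "R = b \<or> L = -1" by (simp add: AI_def)
  then show ?thesis
  proof
    assume R: "R = b"
    have "-L \<le> (1-c^2) + c*b" using I R by (simp add: AI_def)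
    moreover have "c*b - c^2 \<le> c - c^2*b"
    proof -
      have "c*(1+c)*(1-b) \<ge> 0" using c b by simp
      then show ?thesis by (simp add: algebra_simps power2_eq_square)
    qed
    ultimately show ?thesis using R e by simp
  next
    assume L: "L = -1"
    have "R \<le> (1-c^2)*b + c" using I L by (simp add: AI_def)
    then show ?thesis using L e by (simp add: algebra_simps power2_eq_square)
  qed
qed



definition cc :: "real \<Rightarrow> real \<Rightarrow> real" where
  "cc \<alpha> \<beta> = (tan \<alpha> * cos \<beta> - sin \<beta>) / (sin \<beta> + tan \<alpha> * cos \<beta>)"

lemma cc_bounds:
  assumes ang: "0 < \<alpha>" "\<alpha> < pi / 2" "0 \<le> \<beta>" "\<beta> \<le> \<alpha>"
  shows "0 \<le> cc \<alpha> \<beta>" "cc \<alpha> \<beta> \<le> 1"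
    "(1 + cc \<alpha> \<beta>) * (sin \<beta> + tan \<alpha> * cos \<beta>) = 2 * tan \<alpha> * cos \<beta>"
    "1 - cc \<alpha> \<beta> = 2 * tan \<beta> / (tan \<alpha> + tan \<beta>)"
proof -
  note b = basics[OF ang]
  show "0 \<le> cc \<alpha> \<beta>" using b by (simp add: cc_def)
  show "cc \<alpha> \<beta> \<le> 1" using b by (simp add: cc_def divide_le_eq_1)
  show "(1 + cc \<alpha> \<beta>) * (sin \<beta> + tan \<alpha> * cos \<beta>) = 2 * tan \<alpha> * cos \<beta>"
    using b by (simp add: cc_def field_simps)
  have tb: "tan \<beta> = sin \<beta> / cos \<beta>" by (simp add: tan_def)
  have e1: "tan \<alpha> + tan \<beta> = (sin \<beta> + tan \<alpha> * cos \<beta>) / cos \<beta>"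
    using b tb by (simp add: field_simps)
  have e2: "2 * tan \<beta> / (tan \<alpha> + tan \<beta>) = 2 * sin \<beta> / (sin \<beta> + tan \<alpha> * cos \<beta>)"
    unfolding e1 tb using b by (simp add: field_simps)
  show "1 - cc \<alpha> \<beta> = 2 * tan \<beta> / (tan \<alpha> + tan \<beta>)"
    unfolding e2 using b by (simp add: cc_def field_simps)
qed

lemma cost_Suc: "cost (Suc i) P = cost i P + edist (P i) (P (Suc i))"
  by (simp add: cost_def)

lemma hedge_inv:
  assumes ang: "0 < \<alpha>" "\<alpha> < pi / 2" "0 \<le> \<beta>" "\<beta> \<le> \<alpha>"
    and x0: "xs 0 = 0" and nr: "\<forall>j<i. \<not> redundant xs j"
  shows "AI (cc \<alpha> \<beta>) (fst (hedge \<alpha> \<beta> xs i) - snd (hedge \<alpha> \<beta> xs i) * tan \<alpha>)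
            (fst (hedge \<alpha> \<beta> xs i) + snd (hedge \<alpha> \<beta> xs i) * tan \<alpha>)
            (MAX j\<in>{..i}. xs j) (-(MIN j\<in>{..i}. xs j))
         \<and> cost i (hedge \<alpha> \<beta> xs) = snd (hedge \<alpha> \<beta> xs i) / cos \<beta>"
  using nr
proof (induction i)
  case 0
  then show ?case using x0 by (simp add: AI_def cost_def)
next
  case (Suc i)
  note b = basics[OF ang]
  note cb = cc_bounds[OF ang]
  define c where "c = cc \<alpha> \<beta>"
  define k where "k = tan \<alpha>"
  obtain u v where P: "hedge \<alpha> \<beta> xs i = (u, v)" by fastforce
  have cdef: "(tan \<alpha> * cos \<beta> - sin \<beta>)/(sin \<beta> + tan \<alpha> * cos \<beta>) = c" by (simp add: c_def cc_def)
  have calt: "c = (k * cos \<beta> - sin \<beta>)/(sin \<beta> + k * cos \<beta>)" by (simp add: c_def cc_def k_def)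
  define mn where "mn = (MIN j\<in>{..i}. xs j)"
  define mx where "mx = (MAX j\<in>{..i}. xs j)"
  have IH: "AI c (u - v * k) (u + v * k) mx (-mn)" "cost i (hedge \<alpha> \<beta> xs) = v / cos \<beta>"
    using Suc.IH Suc.prems by (auto simp: P c_def k_def mx_def mn_def)
  have mnmx: "mn \<le> mx" unfolding mn_def mx_def by (rule Min_le_Max_im)
  have "2 * (v * k) \<ge> 0" using IH mnmx by (auto simp: AI_def)
  moreover have kp: "k > 0" using b k_def by simp
  ultimately have v0: "v \<ge> 0" by (simp add: zero_le_mult_iff)
  have feas: "(u, v) \<in> FC \<alpha> xs i" using IH v0 by (auto simp: FC_iff AI_def k_def mn_def mx_def)
  define x where "x = xs (Suc i)"
  have "\<not> redundant xs i" using Suc.prems by simp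
  then have "\<not> (mn \<le> x \<and> x \<le> mx)" unfolding redundant_def x_def[symmetric] mn_def[symmetric] mx_def[symmetric] .
  then have "x > mx \<or> x < mn" by linarith
  then show ?case
  proof
    assume xg: "x > mx"
    have "mx \<ge> 0" unfolding mx_def using x0 by (rule Max_ge0)
    then have x0': "x > 0" using xg by simp
    note st = step_right[OF ang P feas x_def[symmetric] xg[unfolded mx_def] x0']
    have mxS: "(MAX j\<in>{..Suc i}. xs j) = x" using xg by (simp add: Max_Suc mx_def[symmetric] x_def[symmetric])
    have mnS: "(MIN j\<in>{..Suc i}. xs j) = mn" using xg mnmx by (simp add: Min_Suc mn_def[symmetric] x_def[symmetric])
    have A: "AI c (if x \<le> u + v * k then u - v * k else u - v * k - c * (x - (u + v * k))) (max (u + v * k) x) x (-mn)"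
      by (rule AI_right[OF cb(1,2)[folded c_def] IH(1) xg])
    obtain u' v' where P': "hedge \<alpha> \<beta> xs (Suc i) = (u', v')" by fastforce
    have st': "u' - v' * k = (if x \<le> u + v * k then u - v * k else u - v * k - c * (x - (u + v * k)))"
       "u' + v' * k = max (u + v * k) x" "edist (u, v) (u', v') = (v' - v) / cos \<beta>"
      using st unfolding P' fst_conv snd_conv k_def[symmetric] by (auto simp: calt)
    show ?case unfolding P' fst_conv snd_conv mxS mnS c_def[symmetric] k_def[symmetric] cost_Suc P
      using A IH(2) st' by (simp add: diff_divide_distrib)
  next
    assume xl: "x < mn"
    have "mn \<le> 0" unfolding mn_def using x0 by (rule Min_le0)
    then have x0': "x < 0" using xl by simp
    note st = step_left[OF ang P feas x_def[symmetric] xl[unfolded mn_def] x0']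
    have mnS: "(MIN j\<in>{..Suc i}. xs j) = x" using xl by (simp add: Min_Suc mn_def[symmetric] x_def[symmetric])
    have mxS: "(MAX j\<in>{..Suc i}. xs j) = mx" using xl mnmx by (simp add: Max_Suc mx_def[symmetric] x_def[symmetric])
    have xl': "x < - (- mn)" using xl by simp
    have A: "AI c (min (u - v * k) x) (if u - v * k \<le> x then u + v * k else u + v * k + c * ((u - v * k) - x)) mx (-x)"
      by (rule AI_left[OF cb(1,2)[folded c_def] IH(1) xl'])
    obtain u' v' where P': "hedge \<alpha> \<beta> xs (Suc i) = (u', v')" by fastforce
    have st': "u' + v' * k = (if u - v * k \<le> x then u + v * k else u + v * k + c * ((u - v * k) - x))"
       "u' - v' * k = min (u - v * k) x" "edist (u, v) (u', v') = (v' - v) / cos \<beta>"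
      using st unfolding P' fst_conv snd_conv k_def[symmetric] by (auto simp: calt)
    show ?case unfolding P' fst_conv snd_conv mxS mnS c_def[symmetric] k_def[symmetric] cost_Suc P
      using A IH(2) st' by (simp add: diff_divide_distrib)
  next
  qed
qed



lemma cost_ge_dist: "dist (P 0) (P n) \<le> cost n P"
proof (induction n)
  case 0 then show ?case by (simp add: cost_def)
next
  case (Suc n)
  have "dist (P 0) (P (Suc n)) \<le> dist (P 0) (P n) + dist (P n) (P (Suc n))" by (rule dist_triangle)
  then show ?case using Suc by (simp add: cost_Suc edist_eq)
qed

lemma dist0: "dist (0::real, 0::real) (u, v) = sqrt (u^2 + v^2)"
  by (simp add: dist_prod_def dist_real_def)

lemma norm_lb1:
  assumes ang: "0 < \<alpha>" "\<alpha> < pi / 2" and v: "v \<ge> 0" and h: "u - v * tan \<alpha> \<le> -1"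
  shows "cos \<alpha> \<le> sqrt (u^2 + v^2)"
proof -
  have sa: "sin \<alpha> > 0" and ca: "cos \<alpha> > 0" using ang by (auto intro: sin_gt_zero cos_gt_zero_pi)
  have "v * sin \<alpha> - u * cos \<alpha> \<ge> cos \<alpha>"
  proof -
    have "(v * tan \<alpha> - u) * cos \<alpha> \<ge> 1 * cos \<alpha>" using h ca by (intro mult_right_mono) auto
    then show ?thesis using ca by (simp add: tan_def algebra_simps)
  qed
  then have "(cos \<alpha>)^2 \<le> (v * sin \<alpha> - u * cos \<alpha>)^2" using ca by (intro power_mono) auto
  also have "\<dots> \<le> (v * sin \<alpha> - u * cos \<alpha>)^2 + (u * sin \<alpha> + v * cos \<alpha>)^2" by simp
  also have "\<dots> = (u^2 + v^2) * ((sin \<alpha>)^2 + (cos \<alpha>)^2)" unfolding power2_eq_square by algebra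
  also have "\<dots> = u^2 + v^2" by (simp only: sin_cos_squared_add mult_1_right)
  finally show ?thesis using ca by (intro real_le_rsqrt) simp
qed

lemma norm_lb2:
  fixes k b u v :: real
  assumes k: "k > 0" and hb: "(b-1)*k^2 + 1 + b \<ge> 0" "b \<le> 1"
    and X: "v * k - u \<ge> 1" and Y: "u + v * k \<ge> b"
  shows "((b-1)/2)^2 + ((1+b)/(2*k))^2 \<le> u^2 + v^2"
proof -
  define a1 where "a1 = (b-1)/2"
  define a2 where "a2 = (1+b)/(2*k)"
  define w1 where "w1 = u - a1"
  define w2 where "w2 = v - a2"
  define X where "X = v * k - u - 1"
  define Y where "Y = u + v * k - b"
  have X0: "X \<ge> 0" and Y0: "Y \<ge> 0" using assms by (auto simp: X_def Y_def)
  have c1: "a1 * k + a2 \<ge> 0"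
  proof -
    have "(a1 * k + a2) * (2 * k) = (b-1)*k^2 + 1 + b" using k by (simp add: a1_def a2_def field_simps power2_eq_square)
    then have "(a1 * k + a2) * (2 * k) \<ge> 0" using hb by simp
    then show ?thesis using k by (simp add: zero_le_mult_iff)
  qed
  have "(1-b)*k^2 \<ge> 0" using hb by simp
  then have b1: "1 + b \<ge> 0" using hb by (simp add: algebra_simps)
  have "a2 \<ge> 0" using b1 k by (simp add: a2_def)
  moreover have "a1 * k \<le> 0" using hb k by (simp add: a1_def mult_nonpos_nonneg)
  ultimately have c2: "a2 - a1 * k \<ge> 0" by simp
  have id: "2 * (a1 * w1 + a2 * w2) = (Y * (a1 * k + a2) + X * (a2 - a1 * k)) / k"
    using k by (simp add: a1_def a2_def w1_def w2_def X_def Y_def field_simps)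
  have "(Y * (a1 * k + a2) + X * (a2 - a1 * k)) / k \<ge> 0"
    using X0 Y0 c1 c2 k by (intro divide_nonneg_pos add_nonneg_nonneg) auto
  then have "a1 * w1 + a2 * w2 \<ge> 0" using id by simp
  moreover have "u^2 + v^2 = a1^2 + a2^2 + 2 * (a1 * w1 + a2 * w2) + w1^2 + w2^2"
    by (simp add: w1_def w2_def power2_eq_square algebra_simps)
  ultimately show ?thesis unfolding a1_def[symmetric] a2_def[symmetric]
    by (smt (verit) zero_le_power2)
qed



definition ad :: "real \<Rightarrow> real \<Rightarrow> real" where
  "ad \<alpha> b = sqrt (((b-1)/2)^2 + ((1+b)/(2*tan \<alpha>))^2)"

lemma good_bounds:
  assumes "good_input n xs" "j \<le> n"
  shows "-1 \<le> xs j" "xs j \<le> (MAX j\<in>{..n}. xs j)"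
proof -
  have "(MIN j\<in>{..n}. xs j) \<le> xs j" using assms(2) by (intro Min_le) auto
  then show "-1 \<le> xs j" using assms(1) by (simp add: good_input_def)
  show "xs j \<le> (MAX j\<in>{..n}. xs j)" using assms(2) by (intro Max_ge) auto
qed

lemma k_cond:
  assumes ang: "0 < \<alpha>" "\<alpha> < pi / 2" and b: "- cos (2 * \<alpha>) \<le> b"
  shows "(b-1) * (tan \<alpha>)^2 + 1 + b \<ge> 0"
proof -
  have ca: "cos \<alpha> > 0" using ang by (intro cos_gt_zero_pi) auto
  have s: "(sin \<alpha>)^2 + (cos \<alpha>)^2 = 1" by simp
  have "(b-1) * (tan \<alpha>)^2 + 1 + b = ((b-1) * (sin \<alpha>)^2 + (1+b) * (cos \<alpha>)^2) / (cos \<alpha>)^2"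
    using ca by (simp add: tan_def field_simps power2_eq_square)
  also have "(b-1) * (sin \<alpha>)^2 + (1+b) * (cos \<alpha>)^2 = b * ((sin \<alpha>)^2 + (cos \<alpha>)^2) + cos (2 * \<alpha>)"
    unfolding cos_double by algebra
  also have "\<dots> = b + cos (2 * \<alpha>)" using s by simp
  finally show ?thesis using b by simp
qed

lemma apex_sol:
  assumes ang: "0 < \<alpha>" "\<alpha> < pi / 2" and g: "good_input n xs" and bdef: "b = (MAX j\<in>{..n}. xs j)"
  shows "is_solution \<alpha> n xs (\<lambda>i. if i = 0 then (0, 0) else ((b-1)/2, (1+b)/(2*tan \<alpha>)))"
proof -
  have k: "tan \<alpha> > 0" using ang tan_gt_zero by auto
  have b0: "b \<ge> 0" using g bdef by (simp add: good_input_def)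
  have x0: "xs 0 = 0" using g by (simp add: good_input_def)
  have "((b-1)/2, (1+b)/(2*tan \<alpha>)) \<in> FC \<alpha> xs i" if "i \<le> n" for i
  proof -
    have e1: "(b-1)/2 - (1+b)/(2*tan \<alpha>) * tan \<alpha> = -1" using k by (simp add: field_simps)
    have e2: "(b-1)/2 + (1+b)/(2*tan \<alpha>) * tan \<alpha> = b" using k by (simp add: field_simps)
    have "-1 \<le> (MIN j\<in>{..i}. xs j)" using good_bounds(1)[OF g] that by (simp add: Min_ge_iff)
    moreover have "(MAX j\<in>{..i}. xs j) \<le> b" using good_bounds(2)[OF g] that bdef by (simp add: Max_le_iff)
    moreover have "0 \<le> (1+b)/(2*tan \<alpha>)" using k b0 by simp
    ultimately show ?thesis unfolding FC_iff e1 e2 by simp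
  qed
  moreover have "(0, 0) \<in> FC \<alpha> xs 0" using x0 by (simp add: FC_iff)
  ultimately show ?thesis by (auto simp: is_solution_def)
qed

lemma OPT_lb:
  assumes ang: "0 < \<alpha>" "\<alpha> < pi / 2" and g: "good_input n xs" and bdef: "b = (MAX j\<in>{..n}. xs j)"
  shows "cos \<alpha> \<le> OPT \<alpha> n xs" "- cos (2 * \<alpha>) \<le> b \<Longrightarrow> ad \<alpha> b \<le> OPT \<alpha> n xs"
proof -
  have k: "tan \<alpha> > 0" using ang tan_gt_zero by auto
  define S where "S = {cost n P | P. is_solution \<alpha> n xs P}"
  have ne: "S \<noteq> {}" using apex_sol[OF ang g bdef] by (auto simp: S_def)
  have pt: "\<exists>u v. cost n P \<ge> sqrt (u^2 + v^2) \<and> 0 \<le> v \<and> u - v * tan \<alpha> \<le> -1 \<and> b \<le> u + v * tan \<alpha>"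
    if "is_solution \<alpha> n xs P" for P
  proof -
    obtain u v where Pn: "P n = (u, v)" by fastforce
    have "P n \<in> FC \<alpha> xs n" "P 0 = (0, 0)" using that by (auto simp: is_solution_def)
    have mn: "(MIN j\<in>{..n}. xs j) = -1" using g by (simp add: good_input_def)
    have "0 \<le> v" "u - v * tan \<alpha> \<le> -1" "b \<le> u + v * tan \<alpha>"
      using \<open>P n \<in> FC \<alpha> xs n\<close> unfolding Pn FC_iff mn bdef[symmetric] by auto
    moreover have "cost n P \<ge> sqrt (u^2 + v^2)" using cost_ge_dist[of P n] \<open>P 0 = (0,0)\<close> Pn dist0 by simp
    ultimately show ?thesis by blast
  qed
  have "cos \<alpha> \<le> Inf S"
  proof (rule cInf_greatest[OF ne])
    fix y assume "y \<in> S"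
    then obtain P where "y = cost n P" "is_solution \<alpha> n xs P" by (auto simp: S_def)
    then show "cos \<alpha> \<le> y" using pt norm_lb1[OF ang] by (meson order_trans)
  qed
  then show "cos \<alpha> \<le> OPT \<alpha> n xs" by (simp add: OPT_def S_def)
  assume hb: "- cos (2 * \<alpha>) \<le> b"
  have kc: "(b-1) * (tan \<alpha>)^2 + 1 + b \<ge> 0" by (rule k_cond[OF ang hb])
  have b1: "b \<le> 1" using g bdef by (simp add: good_input_def)
  have "ad \<alpha> b \<le> Inf S"
  proof (rule cInf_greatest[OF ne])
    fix y assume "y \<in> S"
    then obtain P where y: "y = cost n P" "is_solution \<alpha> n xs P" by (auto simp: S_def)
    then obtain u v where uv: "y \<ge> sqrt (u^2 + v^2)" "0 \<le> v" "u - v * tan \<alpha> \<le> -1" "b \<le> u + v * tan \<alpha>"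
      using pt by blast
    have "((b-1)/2)^2 + ((1+b)/(2*tan \<alpha>))^2 \<le> u^2 + v^2"
      using uv kc b1 k by (intro norm_lb2) auto
    then have "ad \<alpha> b \<le> sqrt (u^2 + v^2)" unfolding ad_def by (rule real_sqrt_le_mono)
    then show "ad \<alpha> b \<le> y" using uv by simp
  qed
  then show "ad \<alpha> b \<le> OPT \<alpha> n xs" by (simp add: OPT_def S_def)
qed



lemma ad_pos:
  assumes ang: "0 < \<alpha>" "\<alpha> < pi / 2" and r: "r > -1"
  shows "ad \<alpha> r > 0"
proof -
  have k: "tan \<alpha> > 0" using ang tan_gt_zero by auto
  have "(1+r)/(2*tan \<alpha>) > 0" using k r by simp
  then have p: "((1+r)/(2*tan \<alpha>))^2 > 0" by (rule zero_less_power)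
  have "((r-1)/2)^2 + ((1+r)/(2*tan \<alpha>))^2 > 0" by (rule add_nonneg_pos[OF zero_le_power2 p])
  then show ?thesis by (simp add: ad_def)
qed

lemma ad_at:
  assumes ang: "0 < \<alpha>" "\<alpha> < pi / 2"
  shows "ad \<alpha> (- cos (2 * \<alpha>)) = cos \<alpha>"
proof -
  have sa: "sin \<alpha> > 0" and ca: "cos \<alpha> > 0" using ang by (auto intro: sin_gt_zero cos_gt_zero_pi)
  have s: "(sin \<alpha>)^2 + (cos \<alpha>)^2 = 1" by simp
  have e1: "- cos (2 * \<alpha>) - 1 = - 2 * (cos \<alpha>)^2" using s unfolding cos_double by algebra
  have e2: "1 + - cos (2 * \<alpha>) = 2 * (sin \<alpha>)^2" using s unfolding cos_double by algebra
  have q1: "(- 2 * (cos \<alpha>)\<^sup>2) / 2 = 0 - (cos \<alpha>)^2" by simp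
  have q2: "(2 * (sin \<alpha>)^2) / (2*tan \<alpha>) = sin \<alpha> * cos \<alpha>"
    using sa ca by (simp add: tan_def power2_eq_square field_simps)
  have "(0 - (cos \<alpha>)^2)^2 + (sin \<alpha> * cos \<alpha>)^2 = (cos \<alpha>)^2" using s by algebra
  then have "((- cos (2 * \<alpha>) - 1)/2)^2 + ((1 + - cos (2 * \<alpha>))/(2*tan \<alpha>))^2 = (cos \<alpha>)^2"
    unfolding e1 e2 q1 q2 .
  then show ?thesis using ca by (simp add: ad_def)
qed

lemma f1_eq:
  assumes ang: "0 < \<alpha>" "\<alpha> < pi / 2" "0 \<le> \<beta>" "\<beta> \<le> \<alpha>" and r: "r > -1"
  shows "f1 \<alpha> \<beta> r = (1 + (1 - cc \<alpha> \<beta>) * r) / ((sin \<beta> + tan \<alpha> * cos \<beta>) * ad \<alpha> r)"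
proof -
  note b = basics[OF ang]
  note cb = cc_bounds[OF ang]
  define D where "D = sin \<beta> + tan \<alpha> * cos \<beta>"
  have D: "D > 0" using b D_def by simp
  have e1: "cos \<beta> * (tan \<alpha> + tan \<beta>) = D" using b by (simp add: D_def tan_def field_simps)
  have s: "(sin \<alpha>)^2 + (cos \<alpha>)^2 = 1" by simp
  have e2: "1 + r^2 + 2 * cos (2 * \<alpha>) * r = (2 * sin \<alpha>)^2 * (((r-1)/2)^2 + ((1+r)/(2*tan \<alpha>))^2)"
  proof -
    have "(2 * sin \<alpha>)^2 * (((r-1)/2)^2 + ((1+r)/(2*tan \<alpha>))^2)
        = (sin \<alpha>)^2 * (r-1)^2 + (cos \<alpha>)^2 * (1+r)^2"
      using b by (simp add: tan_def field_simps power2_eq_square)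
    also have "\<dots> = 1 + r^2 + 2 * cos (2 * \<alpha>) * r" using s unfolding cos_double by algebra
    finally show ?thesis by simp
  qed
  have e3: "sqrt (1 + r^2 + 2 * cos (2 * \<alpha>) * r) = 2 * sin \<alpha> * ad \<alpha> r"
  proof -
    have "sqrt ((2 * sin \<alpha>)^2) = 2 * sin \<alpha>" using b by (simp only: real_sqrt_abs)
    then show ?thesis by (simp only: e2 real_sqrt_mult ad_def)
  qed
  have adp: "ad \<alpha> r > 0" using ad_pos[OF ang(1,2) r] .
  show ?thesis unfolding f1_def e1 e3 cb(4)[symmetric] D_def[symmetric]
    using b D adp by (simp add: field_simps)
qed



lemma cost_LR:
  assumes ang: "0 < \<alpha>" "\<alpha> < pi / 2" "0 \<le> \<beta>" "\<beta> \<le> \<alpha>"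
    and x0: "xs 0 = 0" and nr: "\<forall>j<n. \<not> redundant xs j"
  shows "cost n (hedge \<alpha> \<beta> xs) =
    ((fst (hedge \<alpha> \<beta> xs n) + snd (hedge \<alpha> \<beta> xs n) * tan \<alpha>) -
     (fst (hedge \<alpha> \<beta> xs n) - snd (hedge \<alpha> \<beta> xs n) * tan \<alpha>)) / (2 * tan \<alpha> * cos \<beta>)"
proof -
  note b = basics[OF ang]
  have "cost n (hedge \<alpha> \<beta> xs) = snd (hedge \<alpha> \<beta> xs n) / cos \<beta>"
    using hedge_inv[OF ang x0 nr] by simp
  moreover have "tan \<alpha> \<noteq> 0" "cos \<beta> \<noteq> 0" using b by auto
  ultimately show ?thesis by (simp add: field_simps)
qed

lemma ALG_ub:
  assumes ang: "0 < \<alpha>" "\<alpha> < pi / 2" "0 \<le> \<beta>" "\<beta> \<le> \<alpha>"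
    and g: "good_input n xs" and bdef: "b = (MAX j\<in>{..n}. xs j)"
  shows "cost n (hedge \<alpha> \<beta> xs) \<le> (1 + (1 - cc \<alpha> \<beta>) * b) / (sin \<beta> + tan \<alpha> * cos \<beta>)"
proof -
  note b = basics[OF ang]
  note cb = cc_bounds[OF ang]
  have x0: "xs 0 = 0" and nr: "\<forall>j<n. \<not> redundant xs j" and mn: "(MIN j\<in>{..n}. xs j) = -1"
    and b0: "0 \<le> b" and b1: "b \<le> 1" using g bdef by (auto simp: good_input_def)
  define L where "L = fst (hedge \<alpha> \<beta> xs n) - snd (hedge \<alpha> \<beta> xs n) * tan \<alpha>"
  define R where "R = fst (hedge \<alpha> \<beta> xs n) + snd (hedge \<alpha> \<beta> xs n) * tan \<alpha>"
  have "AI (cc \<alpha> \<beta>) L R b 1" using hedge_inv[OF ang x0 nr] unfolding L_def R_def bdef mn by simp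
  then have RL: "R - L \<le> (1 + cc \<alpha> \<beta>) * (1 + (1 - cc \<alpha> \<beta>) * b)"
    using AI_final cb(1,2) b0 b1 by blast
  have "cost n (hedge \<alpha> \<beta> xs) = (R - L) / (2 * tan \<alpha> * cos \<beta>)"
    unfolding L_def R_def by (rule cost_LR[OF ang x0 nr])
  also have "\<dots> \<le> (1 + cc \<alpha> \<beta>) * (1 + (1 - cc \<alpha> \<beta>) * b) / (2 * tan \<alpha> * cos \<beta>)"
    using RL b by (intro divide_right_mono) auto
  also have "\<dots> = (1 + (1 - cc \<alpha> \<beta>) * b) / (sin \<beta> + tan \<alpha> * cos \<beta>)"
  proof -
    have "2 * tan \<alpha> * cos \<beta> = (1 + cc \<alpha> \<beta>) * (sin \<beta> + tan \<alpha> * cos \<beta>)" using cb(3) by simp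
    moreover have "1 + cc \<alpha> \<beta> > 0" using cb(1) by simp
    ultimately show ?thesis by simp
  qed
  finally show ?thesis .
qed

lemma OPT_exact:
  assumes ang: "0 < \<alpha>" "\<alpha> < pi / 2" and g: "good_input n xs" and bdef: "b = (MAX j\<in>{..n}. xs j)"
    and hb: "- cos (2 * \<alpha>) \<le> b"
  shows "OPT \<alpha> n xs = ad \<alpha> b"
proof -
  define P where "P = (\<lambda>i::nat. if i = 0 then (0::real, 0::real) else ((b-1)/2, (1+b)/(2*tan \<alpha>)))"
  have sol: "is_solution \<alpha> n xs P" unfolding P_def by (rule apex_sol[OF ang g bdef])
  have n1: "n \<ge> 1" using g by (simp add: good_input_def)
  then obtain m where m: "n = Suc m" by (cases n) auto
  have "cost n P = edist (P 0) (P 1) + (\<Sum>i<m. edist (P (Suc i)) (P (Suc (Suc i))))"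
    unfolding cost_def m sum.lessThan_Suc_shift by simp
  also have "\<dots> = ad \<alpha> b" by (simp add: P_def edist_def ad_def)
  finally have c: "cost n P = ad \<alpha> b" .
  have "OPT \<alpha> n xs \<le> cost n P"
    unfolding OPT_def
  proof (rule cInf_lower)
    show "cost n P \<in> {cost n P |P. is_solution \<alpha> n xs P}" using sol by blast
    show "bdd_below {cost n P |P. is_solution \<alpha> n xs P}"
      by (rule bdd_belowI[where m=0]) (auto simp: cost_def edist_def intro: sum_nonneg)
  qed
  then show ?thesis using OPT_lb(2)[OF ang g bdef hb] c by simp
qed



lemma ratio_exact:
  assumes ang: "0 < \<alpha>" "\<alpha> < pi / 2" "0 \<le> \<beta>" "\<beta> \<le> \<alpha>"
    and g: "good_input n xs" and bdef: "b = (MAX j\<in>{..n}. xs j)" and hb: "- cos (2 * \<alpha>) \<le> b"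
    and RL: "(fst (hedge \<alpha> \<beta> xs n) + snd (hedge \<alpha> \<beta> xs n) * tan \<alpha>) -
     (fst (hedge \<alpha> \<beta> xs n) - snd (hedge \<alpha> \<beta> xs n) * tan \<alpha>) = (1 + cc \<alpha> \<beta>) * (1 + (1 - cc \<alpha> \<beta>) * b)"
  shows "cost n (hedge \<alpha> \<beta> xs) / OPT \<alpha> n xs = f1 \<alpha> \<beta> b"
proof -
  note b = basics[OF ang]
  note cb = cc_bounds[OF ang]
  have x0: "xs 0 = 0" and nr: "\<forall>j<n. \<not> redundant xs j" and b0: "0 \<le> b"
    using g bdef by (auto simp: good_input_def)
  have "cost n (hedge \<alpha> \<beta> xs) = (1 + cc \<alpha> \<beta>) * (1 + (1 - cc \<alpha> \<beta>) * b) / (2 * tan \<alpha> * cos \<beta>)"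
    using cost_LR[OF ang x0 nr] RL by simp
  also have "\<dots> = (1 + (1 - cc \<alpha> \<beta>) * b) / (sin \<beta> + tan \<alpha> * cos \<beta>)"
  proof -
    have "2 * tan \<alpha> * cos \<beta> = (1 + cc \<alpha> \<beta>) * (sin \<beta> + tan \<alpha> * cos \<beta>)" using cb(3) by simp
    moreover have "1 + cc \<alpha> \<beta> > 0" using cb(1) by simp
    ultimately show ?thesis by simp
  qed
  finally have A: "cost n (hedge \<alpha> \<beta> xs) = (1 + (1 - cc \<alpha> \<beta>) * b) / (sin \<beta> + tan \<alpha> * cos \<beta>)" .
  have O: "OPT \<alpha> n xs = ad \<alpha> b" by (rule OPT_exact[OF ang(1,2) g bdef hb])
  have "b > -1" using b0 by simp
  from f1_eq[OF ang this] show ?thesis unfolding A O by (simp add: field_simps)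
qed

lemma input_zero:
  assumes ang: "0 < \<alpha>" "\<alpha> < pi / 2" "0 \<le> \<beta>" "\<beta> \<le> \<alpha>" and hb: "- cos (2 * \<alpha>) \<le> 0"
  shows "good_input 1 (\<lambda>i. if i = 1 then -1 else 0)
    \<and> cost 1 (hedge \<alpha> \<beta> (\<lambda>i. if i = 1 then -1 else 0)) / OPT \<alpha> 1 (\<lambda>i. if i = 1 then -1 else 0) = f1 \<alpha> \<beta> 0"
proof -
  define xs :: "nat \<Rightarrow> real" where "xs = (\<lambda>i. if i = 1 then -1 else 0)"
  have s1: "{..1::nat} = {0, 1}" by auto
  have mn1: "(MIN j\<in>{..1}. xs j) = -1" unfolding s1 by (simp add: xs_def)
  have mx1: "(MAX j\<in>{..1}. xs j) = 0" unfolding s1 by (simp add: xs_def)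
  have nr0: "\<not> redundant xs 0" by (simp add: redundant_def xs_def)
  have g: "good_input 1 xs" using mn1 mx1 nr0 by (simp add: good_input_def xs_def)
  have P0: "hedge \<alpha> \<beta> xs 0 = (0, 0)" by simp
  have F0: "(0, 0) \<in> FC \<alpha> xs 0" by (simp add: FC_iff xs_def)
  have st: "fst (hedge \<alpha> \<beta> xs (Suc 0)) + snd (hedge \<alpha> \<beta> xs (Suc 0)) * tan \<alpha> = cc \<alpha> \<beta>"
    "fst (hedge \<alpha> \<beta> xs (Suc 0)) - snd (hedge \<alpha> \<beta> xs (Suc 0)) * tan \<alpha> = -1"
    using step_left[OF ang P0 F0, of "-1"] by (auto simp: xs_def cc_def)
  have RL: "(fst (hedge \<alpha> \<beta> xs 1) + snd (hedge \<alpha> \<beta> xs 1) * tan \<alpha>) -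
     (fst (hedge \<alpha> \<beta> xs 1) - snd (hedge \<alpha> \<beta> xs 1) * tan \<alpha>) = (1 + cc \<alpha> \<beta>) * (1 + (1 - cc \<alpha> \<beta>) * 0)"
    using st by simp
  have "cost 1 (hedge \<alpha> \<beta> xs) / OPT \<alpha> 1 xs = f1 \<alpha> \<beta> 0"
    by (rule ratio_exact[OF ang g mx1[symmetric] hb RL])
  then show ?thesis using g by (simp add: xs_def)
qed

lemma input_pos:
  assumes ang: "0 < \<alpha>" "\<alpha> < pi / 2" "0 \<le> \<beta>" "\<beta> \<le> \<alpha>" and hb: "- cos (2 * \<alpha>) \<le> r"
    and r: "0 < r" "r \<le> 1"
  shows "good_input 2 (\<lambda>i. if i = 1 then r else if i = 2 then -1 else 0)
    \<and> cost 2 (hedge \<alpha> \<beta> (\<lambda>i. if i = 1 then r else if i = 2 then -1 else 0))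
       / OPT \<alpha> 2 (\<lambda>i. if i = 1 then r else if i = 2 then -1 else 0) = f1 \<alpha> \<beta> r"
proof -
  note b = basics[OF ang]
  note cb = cc_bounds[OF ang]
  define c where "c = cc \<alpha> \<beta>"
  define k where "k = tan \<alpha>"
  have calt: "(tan \<alpha> * cos \<beta> - sin \<beta>) / (sin \<beta> + tan \<alpha> * cos \<beta>) = c" by (simp add: c_def cc_def)
  define xs :: "nat \<Rightarrow> real" where "xs = (\<lambda>i. if i = 1 then r else if i = 2 then -1 else 0)"
  have s1: "{..Suc 0} = {0, 1}" by auto
  have s2: "{..2::nat} = {0, 1, 2}" by auto
  have mn1: "(MIN j\<in>{..Suc 0}. xs j) = 0" unfolding s1 using r by (simp add: xs_def)
  have mx1: "(MAX j\<in>{..Suc 0}. xs j) = r" unfolding s1 using r by (simp add: xs_def)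
  have mn2: "(MIN j\<in>{..2}. xs j) = -1" unfolding s2 using r by (simp add: xs_def)
  have mx2: "(MAX j\<in>{..2}. xs j) = r" unfolding s2 using r by (simp add: xs_def)
  have nr0: "\<not> redundant xs 0" using r by (simp add: redundant_def xs_def)
  have nr1: "\<not> redundant xs 1" using mn1 mx1 r unfolding redundant_def by (simp add: xs_def)
  have "\<forall>i<2. \<not> redundant xs i" using nr0 nr1 by (auto simp: less_2_cases_iff)
  then have g: "good_input 2 xs" using mn2 mx2 r by (simp add: good_input_def xs_def)
  have P0: "hedge \<alpha> \<beta> xs 0 = (0, 0)" by simp
  have F0: "(0, 0) \<in> FC \<alpha> xs 0" by (simp add: FC_iff xs_def)
  obtain u1 v1 where P1: "hedge \<alpha> \<beta> xs (Suc 0) = (u1, v1)" by fastforce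
  have calt2: "c = (k * cos \<beta> - sin \<beta>) / (sin \<beta> + k * cos \<beta>)" by (simp add: c_def cc_def k_def)
  have x1: "xs (Suc 0) = r" by (simp add: xs_def)
  have m0: "r > (MAX j\<in>{..0}. xs j)" using r by (simp add: xs_def)
  note S1 = step_right[OF ang P0 F0 x1 m0 r(1)]
  have st1: "u1 - v1 * k = - c * r" "u1 + v1 * k = r"
    using S1 r unfolding P1 fst_conv snd_conv k_def[symmetric] by (auto simp: calt2)
  note L1 = st1(1) and R1 = st1(2)
  have "c * r \<ge> 0" using cb(1) r c_def by simp
  then have "2 * (v1 * k) \<ge> 0" using L1 R1 r by simp
  moreover have kp: "k > 0" using b k_def by simp
  ultimately have v1: "v1 \<ge> 0" by (simp add: zero_le_mult_iff)
  have F1: "(u1, v1) \<in> FC \<alpha> xs (Suc 0)"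
    unfolding FC_iff mn1 mx1 k_def[symmetric] using v1 L1 R1 \<open>c * r \<ge> 0\<close> by simp
  have x2: "xs (Suc (Suc 0)) = -1" by (simp add: xs_def)
  have m1: "-1 < (MIN j\<in>{..Suc 0}. xs j)" using mn1 by simp
  note S2 = step_left[OF ang P1 F1 x2 m1]
  obtain u2 v2 where P2: "hedge \<alpha> \<beta> xs (Suc (Suc 0)) = (u2, v2)" by fastforce
  have st2: "u2 + v2 * k = (if u1 - v1 * k \<le> -1 then u1 + v1 * k else u1 + v1 * k + c * ((u1 - v1 * k) - (-1)))"
    "u2 - v2 * k = min (u1 - v1 * k) (-1)"
    using S2 unfolding P2 fst_conv snd_conv k_def[symmetric] by (auto simp: calt2)
  have cr1: "c * r \<le> 1" using cb(2) r c_def by (simp add: mult_le_one)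
  have R2: "u2 + v2 * k = r + c * (1 - c * r)"
  proof (cases "c * r = 1")
    case True
    then show ?thesis using st2(1) L1 R1 by simp
  next
    case False
    then have "c * r < 1" using cr1 by simp
    have h: "k * v1 - u1 = c * r" using L1 by (simp add: algebra_simps)
    have h2: "c * (k * v1) = c * u1 + c * (c * r)" unfolding h[symmetric] by (simp add: algebra_simps)
    show ?thesis using st2(1) L1 R1 \<open>c * r < 1\<close> h2 by (simp add: algebra_simps)
  qed
  have L2: "u2 - v2 * k = -1" using st2(2) L1 cr1 by simp
  have P2': "hedge \<alpha> \<beta> xs 2 = (u2, v2)" using P2 by (simp add: numeral_2_eq_2)
  have RL: "(fst (hedge \<alpha> \<beta> xs 2) + snd (hedge \<alpha> \<beta> xs 2) * tan \<alpha>) -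
     (fst (hedge \<alpha> \<beta> xs 2) - snd (hedge \<alpha> \<beta> xs 2) * tan \<alpha>) = (1 + cc \<alpha> \<beta>) * (1 + (1 - cc \<alpha> \<beta>) * r)"
    unfolding P2' fst_conv snd_conv k_def[symmetric] c_def[symmetric] R2 L2 by (simp add: algebra_simps)
  have "cost 2 (hedge \<alpha> \<beta> xs) / OPT \<alpha> 2 xs = f1 \<alpha> \<beta> r"
    by (rule ratio_exact[OF ang g mx2[symmetric] hb RL])
  then show ?thesis using g by (simp add: xs_def)
qed



lemma f1_ad:
  assumes ang: "0 < \<alpha>" "\<alpha> < pi / 2" "0 \<le> \<beta>" "\<beta> \<le> \<alpha>" and r: "r \<ge> 0"
  shows "(1 + (1 - cc \<alpha> \<beta>) * r) / (sin \<beta> + tan \<alpha> * cos \<beta>) = f1 \<alpha> \<beta> r * ad \<alpha> r"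
    "f1 \<alpha> \<beta> r \<ge> 0"
proof -
  note b = basics[OF ang]
  note cb = cc_bounds[OF ang]
  have r1: "r > -1" using r by simp
  have adp: "ad \<alpha> r > 0" by (rule ad_pos[OF ang(1,2) r1])
  show "(1 + (1 - cc \<alpha> \<beta>) * r) / (sin \<beta> + tan \<alpha> * cos \<beta>) = f1 \<alpha> \<beta> r * ad \<alpha> r"
    unfolding f1_eq[OF ang r1] using adp by simp
  have "0 \<le> 1 - cc \<alpha> \<beta>" using cb(2) by linarith
  then have "(1 - cc \<alpha> \<beta>) * r \<ge> 0" using r by (rule mult_nonneg_nonneg)
  then show "f1 \<alpha> \<beta> r \<ge> 0" unfolding f1_eq[OF ang r1] using adp b
    by (intro divide_nonneg_pos mult_pos_pos) auto
qed

lemma upper_ratio: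
  assumes ang: "0 < \<alpha>" "\<alpha> < pi / 2" "0 \<le> \<beta>" "\<beta> \<le> \<alpha>" and g: "good_input n xs"
    and hF: "\<forall>r\<in>{max 0 (- cos (2 * \<alpha>))..1}. f1 \<alpha> \<beta> r \<le> F"
  shows "cost n (hedge \<alpha> \<beta> xs) / OPT \<alpha> n xs \<le> F"
proof -
  note b = basics[OF ang]
  note cb = cc_bounds[OF ang]
  define bb where "bb = (MAX j\<in>{..n}. xs j)"
  define D where "D = sin \<beta> + tan \<alpha> * cos \<beta>"
  have D: "D > 0" using b D_def by simp
  have b0: "0 \<le> bb" and b1: "bb \<le> 1" using g by (auto simp: good_input_def bb_def)
  have A: "cost n (hedge \<alpha> \<beta> xs) \<le> (1 + (1 - cc \<alpha> \<beta>) * bb) / D"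
    unfolding D_def by (rule ALG_ub[OF ang g bb_def])
  have O1: "cos \<alpha> \<le> OPT \<alpha> n xs" by (rule OPT_lb(1)[OF ang(1,2) g bb_def])
  have Opos: "OPT \<alpha> n xs > 0" using O1 b by linarith
  have key: "cost n (hedge \<alpha> \<beta> xs) \<le> F * OPT \<alpha> n xs"
  proof (cases "- cos (2 * \<alpha>) \<le> bb")
    case True
    have O2: "ad \<alpha> bb \<le> OPT \<alpha> n xs" by (rule OPT_lb(2)[OF ang(1,2) g bb_def True])
    have inI: "bb \<in> {max 0 (- cos (2 * \<alpha>))..1}" using True b0 b1 by simp
    have F: "f1 \<alpha> \<beta> bb \<le> F" using hF inI by blast
    have f0: "f1 \<alpha> \<beta> bb \<ge> 0" by (rule f1_ad(2)[OF ang b0])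
    have adp: "ad \<alpha> bb \<ge> 0" using ad_pos[OF ang(1,2), of bb] b0 by simp
    have "cost n (hedge \<alpha> \<beta> xs) \<le> f1 \<alpha> \<beta> bb * ad \<alpha> bb"
      using A f1_ad(1)[OF ang b0] D_def by simp
    also have "\<dots> \<le> F * OPT \<alpha> n xs" using F f0 adp O2 by (intro mult_mono) auto
    finally show ?thesis .
  next
    case False
    define r1 where "r1 = - cos (2 * \<alpha>)"
    have r1b: "bb < r1" using False r1_def by simp
    have r1le: "r1 \<le> 1" using r1_def by simp
    have inI: "r1 \<in> {max 0 (- cos (2 * \<alpha>))..1}" using r1b b0 r1le r1_def by simp
    have r10: "r1 \<ge> 0" using r1b b0 by simp
    have F: "f1 \<alpha> \<beta> r1 \<le> F" using hF inI by blast
    have f0: "f1 \<alpha> \<beta> r1 \<ge> 0" by (rule f1_ad(2)[OF ang r10])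
    have "(1 - cc \<alpha> \<beta>) * bb \<le> (1 - cc \<alpha> \<beta>) * r1" using cb(2) r1b by (intro mult_left_mono) auto
    then have "(1 + (1 - cc \<alpha> \<beta>) * bb) / D \<le> (1 + (1 - cc \<alpha> \<beta>) * r1) / D"
      using D by (intro divide_right_mono) auto
    also have "\<dots> = f1 \<alpha> \<beta> r1 * cos \<alpha>"
      using f1_ad(1)[OF ang r10] ad_at[OF ang(1,2)] D_def r1_def by simp
    also have "\<dots> \<le> F * OPT \<alpha> n xs" using F f0 O1 b by (intro mult_mono) auto
    finally show ?thesis using A by simp
  qed
  show ?thesis using key Opos by (simp add: divide_le_eq)
qed

lemma f1_cont:
  assumes ang: "0 < \<alpha>" "\<alpha> < pi / 2" "0 \<le> \<beta>" "\<beta> \<le> \<alpha>"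
  shows "continuous_on {max 0 (- cos (2 * \<alpha>))..1} (f1 \<alpha> \<beta>)"
proof -
  note b = basics[OF ang]
  define g where "g = (\<lambda>r. (1 + (1 - cc \<alpha> \<beta>) * r) /
      ((sin \<beta> + tan \<alpha> * cos \<beta>) * sqrt (((r-1)/2)^2 + ((1+r)/(2*tan \<alpha>))^2)))"
  have nz: "\<forall>r\<in>{max 0 (- cos (2 * \<alpha>))..1}. (sin \<beta> + tan \<alpha> * cos \<beta>) * sqrt (((r-1)/2)^2 + ((1+r)/(2*tan \<alpha>))^2) \<noteq> 0"
  proof
    fix r assume "r \<in> {max 0 (- cos (2 * \<alpha>))..1}"
    then have "r > -1" by simp
    then have "ad \<alpha> r > 0" by (rule ad_pos[OF ang(1,2)])
    then show "(sin \<beta> + tan \<alpha> * cos \<beta>) * sqrt (((r-1)/2)^2 + ((1+r)/(2*tan \<alpha>))^2) \<noteq> 0"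
      using b by (simp add: ad_def)
  qed
  have "continuous_on {max 0 (- cos (2 * \<alpha>))..1} g"
    unfolding g_def
    apply (rule continuous_on_divide)
      apply (intro continuous_intros)
     apply (intro continuous_intros)
    using nz b(1) by auto
  moreover have "f1 \<alpha> \<beta> r = g r" if "r \<in> {max 0 (- cos (2 * \<alpha>))..1}" for r
  proof -
    have "r > -1" using that by simp
    then show ?thesis unfolding f1_eq[OF ang \<open>r > -1\<close>] g_def ad_def by simp
  qed
  ultimately show ?thesis using continuous_on_cong by (metis (no_types, lifting))
qed



theorem lemma5:
  fixes \<alpha> \<beta> :: real
  assumes "0 < \<alpha>" and "\<alpha> < pi / 2" and "0 \<le> \<beta>" and "\<beta> \<le> \<alpha>"
  shows "(\<exists>r0\<in>{max 0 (- cos (2 * \<alpha>))..1}.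
            (\<forall>r\<in>{max 0 (- cos (2 * \<alpha>))..1}. f1 \<alpha> \<beta> r \<le> f1 \<alpha> \<beta> r0)
            \<and> hedge_CR \<alpha> \<beta> = ereal (f1 \<alpha> \<beta> r0))"
proof -
  note ang = assms
  define I where "I = {max 0 (- cos (2 * \<alpha>))..1}"
  have ne: "I \<noteq> {}" unfolding I_def by simp
  have "continuous_on I (f1 \<alpha> \<beta>)" unfolding I_def by (rule f1_cont[OF ang])
  then obtain r0 where r0: "r0 \<in> I" and mx: "\<forall>r\<in>I. f1 \<alpha> \<beta> r \<le> f1 \<alpha> \<beta> r0"
    using continuous_attains_sup[OF compact_Icc[of "max 0 (- cos (2 * \<alpha>))" 1, folded I_def] ne]
    by blast
  define S where "S = {(n, xs). good_input n xs}"
  have up: "hedge_CR \<alpha> \<beta> \<le> ereal (f1 \<alpha> \<beta> r0)"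
    unfolding hedge_CR_def
  proof (rule SUP_least)
    fix p assume "p \<in> {(n, xs). good_input n xs}"
    then obtain n xs where p: "p = (n, xs)" and g: "good_input n xs" by auto
    have "cost n (hedge \<alpha> \<beta> xs) / OPT \<alpha> n xs \<le> f1 \<alpha> \<beta> r0"
      by (rule upper_ratio[OF ang g]) (use mx I_def in auto)
    then show "(case p of (n, xs) \<Rightarrow> ereal (cost n (hedge \<alpha> \<beta> xs) / OPT \<alpha> n xs)) \<le> ereal (f1 \<alpha> \<beta> r0)"
      by (simp add: p)
  qed
  have "\<exists>n xs. good_input n xs \<and> cost n (hedge \<alpha> \<beta> xs) / OPT \<alpha> n xs = f1 \<alpha> \<beta> r0"
  proof (cases "r0 = 0")
    case True
    have hb: "- cos (2 * \<alpha>) \<le> 0" using r0 True I_def by simp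
    show ?thesis using input_zero[OF ang hb] True by blast
  next
    case False
    have "0 < r0" "r0 \<le> 1" "- cos (2 * \<alpha>) \<le> r0" using r0 False I_def by auto
    then show ?thesis using input_pos[OF ang] by blast
  qed
  then obtain n xs where g: "good_input n xs" and eq: "cost n (hedge \<alpha> \<beta> xs) / OPT \<alpha> n xs = f1 \<alpha> \<beta> r0"
    by blast
  have lo: "ereal (f1 \<alpha> \<beta> r0) \<le> hedge_CR \<alpha> \<beta>"
    unfolding hedge_CR_def
  proof -
    have "(n, xs) \<in> {(n, xs). good_input n xs}" using g by simp
    then have "(case (n, xs) of (n, xs) \<Rightarrow> ereal (cost n (hedge \<alpha> \<beta> xs) / OPT \<alpha> n xs))
        \<le> (SUP (n, xs)\<in>{(n, xs). good_input n xs}. ereal (cost n (hedge \<alpha> \<beta> xs) / OPT \<alpha> n xs))"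
      by (rule SUP_upper)
    then show "ereal (f1 \<alpha> \<beta> r0) \<le> (SUP (n, xs)\<in>{(n, xs). good_input n xs}. ereal (cost n (hedge \<alpha> \<beta> xs) / OPT \<alpha> n xs))"
      using eq by simp
  qed
  have "hedge_CR \<alpha> \<beta> = ereal (f1 \<alpha> \<beta> r0)" using up lo by (rule antisym)
  then show ?thesis using r0 mx unfolding I_def by blast
qed

end
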